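(* Let $X$ be a continuous random variable with support contained in $[0,\infty)$, cumulative distribution function $F$ and probability density function $f$. Let $\theta_1\in\mathbb{R}$, $\theta_2>0$, $\theta_3>0$, and define $Y=\theta_1-\theta_2\log(X)+\theta_3X$. Put $y_{\min}=\theta_1+\theta_2-\theta_2\log(\theta_2/\theta_3)$, and for $y\ge y_{\min}$ define $$x_L(y)=-\frac{\theta_2}{\theta_3}W_0\!\left(-\frac{\theta_3}{\theta_2}\exp\!\left(-\frac{y-\theta_1}{\theta_2}\right)\right),\qquad x_U(y)=-\frac{\theta_2}{\theta_3}W_{-1}\!\left(-\frac{\theta_3}{\theta_2}\exp\!\left(-\frac{y-\theta_1}{\theta_2}\right)\right),$$ which are the solutions of $y=\theta_1-\theta_2\log x+\theta_3x$ in $(0,\theta_2/\theta_3]$ and $[\theta_2/\theta_3,\infty)$ respectively. Then $Y$ takes values in $[y_{\min},\infty)$, and for $y\ge y_{\min}$ its cumulative distribution function is $$\Pr(Y\le y)=F\big(x_U(y)\big)-F\big(x_L(y)\big),$$ and (for $y>y_{\min}$) its probability density function is $$f_Y(y)=\frac{x_L(y)}{\theta_2-\theta_3x_L(y)}\,f\big(x_L(y)\big)+\frac{x_U(y)}{\theta_3x_U(y)-\theta_2}\,f\big(x_U(y)\big).$$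
   Context: $W_0$ and $W_{-1}$ denote the two real branches of the Lambert W function, i.e. the real solutions $w$ of $w e^{w}=z$ for $z\in[-1/e,0)$, with $W_0(z)\ge -1$ and $W_{-1}(z)\le -1$. The random variable $Y$ is called the (log-Lambert W) transform of $X$ with parameters $\theta=(\theta_1,\theta_2,\theta_3)$. *)

theory Defs
  imports "HOL-Probability.Probability"
begin

definition lambertW0 :: "real \<Rightarrow> real" where
  "lambertW0 z = (THE w. -1 \<le> w \<and> w * exp w = z)"

definition lambertWm1 :: "real \<Rightarrow> real" where
  "lambertWm1 z = (THE w. w \<le> -1 \<and> w * exp w = z)"

definition llw_ymin :: "real \<Rightarrow> real \<Rightarrow> real \<Rightarrow> real" where
  "llw_ymin t1 t2 t3 = t1 + t2 - t2 * ln (t2 / t3)"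

definition llw_xL :: "real \<Rightarrow> real \<Rightarrow> real \<Rightarrow> real \<Rightarrow> real" where
  "llw_xL t1 t2 t3 y = - (t2 / t3) * lambertW0 (- (t3 / t2) * exp (- (y - t1) / t2))"

definition llw_xU :: "real \<Rightarrow> real \<Rightarrow> real \<Rightarrow> real \<Rightarrow> real" where
  "llw_xU t1 t2 t3 y = - (t2 / t3) * lambertWm1 (- (t3 / t2) * exp (- (y - t1) / t2))"

end

theory Submission
  imports Defs
begin


definition hh :: "real \<Rightarrow> real \<Rightarrow> real \<Rightarrow> real \<Rightarrow> real" where
  "hh t1 t2 t3 x = t1 - t2 * ln x + t3 * x"

context
  fixes t1 t2 t3 :: real
  assumes t2: "t2 > 0" and t3: "t3 > 0"
begin

lemma hh_deriv: "x > 0 \<Longrightarrow> (hh t1 t2 t3 has_real_derivative (t3 - t2 / x)) (at x)"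
  unfolding hh_def[abs_def]
  by (auto intro!: derivative_eq_intros simp: field_simps)

lemma hh_cont: "0 < a \<Longrightarrow> continuous_on {a..b} (hh t1 t2 t3)"
  unfolding hh_def[abs_def] by (auto intro!: continuous_intros)

lemma hh_dec: assumes "0 < a" "a < b" "b \<le> t2/t3" shows "hh t1 t2 t3 b < hh t1 t2 t3 a"
proof (rule DERIV_neg_imp_decreasing_open[OF assms(2) _ hh_cont[OF assms(1)]])
  fix x assume x: "a < x" "x < b"
  then have "x < t2/t3" using assms by auto
  then have "t3 * x < t2" using t3 by (simp add: field_simps)
  then have "t3 - t2/x < 0" using x assms by (simp add: field_simps)
  then show "\<exists>y. (hh t1 t2 t3 has_real_derivative y) (at x) \<and> y < 0"
    using hh_deriv[of x] x assms by (intro exI[of _ "t3 - t2/x"]) auto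
qed

lemma hh_inc: assumes "t2/t3 \<le> a" "a < b" shows "hh t1 t2 t3 a < hh t1 t2 t3 b"
proof (rule DERIV_pos_imp_increasing_open[OF assms(2) _ hh_cont])
  have c: "0 < t2/t3" using t2 t3 by simp
  fix x assume x: "a < x" "x < b"
  then have "x > t2/t3" using assms by auto
  then have "t3 * x > t2" using t3 by (simp add: field_simps)
  then have "t3 - t2/x > 0" using x assms c by (simp add: field_simps)
  then show "\<exists>y. (hh t1 t2 t3 has_real_derivative y) (at x) \<and> y > 0"
    using hh_deriv[of x] x assms c by (intro exI[of _ "t3 - t2/x"]) auto
next
  show "0 < a" using assms t2 t3 by (smt (verit) divide_pos_pos)
qed

lemma hh_c: "hh t1 t2 t3 (t2/t3) = llw_ymin t1 t2 t3"
  unfolding hh_def llw_ymin_def using t3 by simp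

lemma hh_ge: assumes "x > 0" shows "llw_ymin t1 t2 t3 \<le> hh t1 t2 t3 x"
proof -
  consider "x < t2/t3" | "x = t2/t3" | "x > t2/t3" by linarith
  then show ?thesis using hh_dec[OF assms, of "t2/t3"] hh_inc[of "t2/t3" x] hh_c
    by cases auto
qed

lemma hh_gt: assumes "x > 0" "x \<noteq> t2/t3" shows "llw_ymin t1 t2 t3 < hh t1 t2 t3 x"
  using hh_dec[OF assms(1), of "t2/t3"] hh_inc[of "t2/t3" x] hh_c assms by force


lemma ex_low: assumes "llw_ymin t1 t2 t3 \<le> y"
  shows "\<exists>x. 0 < x \<and> x \<le> t2/t3 \<and> hh t1 t2 t3 x = y"
proof -
  have c: "0 < t2/t3" using t2 t3 by simp
  define a where "a = min (t2/t3) (exp (-(\<bar>y-t1\<bar>+1)/t2))"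
  have a0: "0 < a" unfolding a_def using c by simp
  have "ln a \<le> -(\<bar>y-t1\<bar>+1)/t2" unfolding a_def
    by (metis a0 a_def exp_le_cancel_iff exp_ln min.cobounded2)
  then have "t2 * ln a \<le> -(\<bar>y-t1\<bar>+1)" using t2 by (simp add: field_simps)
  moreover have "0 < t3 * a" using t3 a0 by simp
  ultimately have "y \<le> hh t1 t2 t3 a" unfolding hh_def by linarith
  moreover have "hh t1 t2 t3 (t2/t3) \<le> y" using hh_c assms by simp
  moreover have "a \<le> t2/t3" unfolding a_def by simp
  ultimately obtain x where "a \<le> x" "x \<le> t2/t3" "hh t1 t2 t3 x = y"
    using IVT2'[of "hh t1 t2 t3" "t2/t3" y a] hh_cont[OF a0] by blast
  then show ?thesis using a0 by (intro exI[of _ x]) auto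
qed

lemma ex_high: assumes "llw_ymin t1 t2 t3 \<le> y"
  shows "\<exists>x. t2/t3 \<le> x \<and> hh t1 t2 t3 x = y"
proof -
  have c: "0 < t2/t3" using t2 t3 by simp
  define qq where "qq = t2 * ln (2*t2/t3)"
  have bnd: "t2 * ln x \<le> t3 * x / 2 + qq - t2" if "x > 0" for x
  proof -
    have p: "0 < t3 * x / (2*t2)" using that t2 t3 by simp
    have "ln (t3 * x / (2*t2)) \<le> t3 * x / (2*t2) - 1" by (rule ln_le_minus_one[OF p])
    moreover have "ln (t3 * x / (2*t2)) = ln x - ln (2*t2/t3)"
    proof -
      have "t3 * x / (2*t2) = x / (2*t2/t3)" using t3 by (simp add: field_simps)
      then show ?thesis using that t2 t3 by (simp add: ln_div ln_mult)
    qed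
    ultimately have "ln x \<le> t3 * x / (2*t2) - 1 + ln (2*t2/t3)" by simp
    then have "t2 * ln x \<le> t2 * (t3 * x / (2*t2) - 1 + ln (2*t2/t3))"
      using t2 by (simp add: mult_left_mono)
    also have "\<dots> = t3 * x / 2 + qq - t2" unfolding qq_def using t2 by (simp add: field_simps)
    finally show ?thesis .
  qed
  define b where "b = max (t2/t3) (2*(\<bar>y-t1\<bar> + \<bar>qq\<bar> + t2)/t3 + 1)"
  have b0: "0 < b" unfolding b_def using c by simp
  have "2*(\<bar>y-t1\<bar> + \<bar>qq\<bar> + t2)/t3 \<le> b" unfolding b_def by simp
  then have "2*(\<bar>y-t1\<bar> + \<bar>qq\<bar> + t2) \<le> t3 * b" using t3 by (simp add: field_simps)
  moreover have "y - t1 \<le> \<bar>y-t1\<bar>" "qq \<le> \<bar>qq\<bar>" by auto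
  moreover have "t1 + t3*b/2 - qq + t2 \<le> hh t1 t2 t3 b" unfolding hh_def using bnd[OF b0] by linarith
  ultimately have "y \<le> hh t1 t2 t3 b" using t2 by argo
  moreover have "hh t1 t2 t3 (t2/t3) \<le> y" using hh_c assms by simp
  moreover have "t2/t3 \<le> b" unfolding b_def by simp
  ultimately obtain x where "t2/t3 \<le> x" "x \<le> b" "hh t1 t2 t3 x = y"
    using IVT'[of "hh t1 t2 t3" "t2/t3" y b] hh_cont[OF c] by blast
  then show ?thesis by blast
qed

lemma link: assumes "x > 0"
  shows "(-(t3/t2)*x) * exp (-(t3/t2)*x) = - (t3 / t2) * exp (- (y - t1) / t2)
     \<longleftrightarrow> hh t1 t2 t3 x = y"
proof -
  have "(-(t3/t2)*x) * exp (-(t3/t2)*x) = - (t3 / t2) * exp (- (y - t1) / t2)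
     \<longleftrightarrow> x * exp (-(t3/t2)*x) = exp (- (y - t1) / t2)" using t2 t3 by auto
  also have "\<dots> \<longleftrightarrow> ln (x * exp (-(t3/t2)*x)) = ln (exp (- (y - t1) / t2))"
    using assms by (subst ln_inj_iff) auto
  also have "\<dots> \<longleftrightarrow> ln x - (t3/t2)*x = - (y - t1) / t2"
    using assms by (simp add: ln_mult)
  also have "\<dots> \<longleftrightarrow> t2 * ln x - t3 * x = - (y - t1)"
    using t2 by (simp add: field_simps)
  also have "\<dots> \<longleftrightarrow> hh t1 t2 t3 x = y" unfolding hh_def by linarith
  finally show ?thesis .
qed

lemma xL_eq: assumes "0 < x" "x \<le> t2/t3" "hh t1 t2 t3 x = y"
  shows "llw_xL t1 t2 t3 y = x"
proof -
  have c: "0 < t2/t3" using t2 t3 by simp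
  let ?z = "- (t3 / t2) * exp (- (y - t1) / t2)"
  have "(THE w. -1 \<le> w \<and> w * exp w = ?z) = -(t3/t2)*x"
  proof (rule the_equality)
    show "-1 \<le> -(t3/t2)*x \<and> (-(t3/t2)*x) * exp (-(t3/t2)*x) = ?z"
      using link[OF assms(1)] assms t2 t3 by (auto simp: field_simps)
  next
    fix w assume w: "-1 \<le> w \<and> w * exp w = ?z"
    have "?z < 0" using t2 t3 by (simp add: mult_pos_pos)
    then have "w < 0" using w by (smt (verit) exp_gt_zero mult_nonneg_nonneg)
    define x' where "x' = -(t2/t3)*w"
    have x'0: "0 < x'" unfolding x'_def using \<open>w<0\<close> t2 t3 mult_pos_pos[of "t2/t3" "-w"] by simp
    have wx: "w = -(t3/t2)*x'" unfolding x'_def using t2 t3 by simp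
    have "t2 * (-w) \<le> t2 * 1" using w t2 by (intro mult_left_mono) auto
    then have "x' \<le> t2/t3" unfolding x'_def using t3 by (simp add: field_simps)
    have "hh t1 t2 t3 x' = y" using link[OF x'0, of y] w wx by simp
    then have "x' = x"
      using hh_dec[OF x'0, of x] hh_dec[OF assms(1), of x'] assms \<open>x' \<le> t2/t3\<close>
      by (cases x' x rule: linorder_cases) auto
    then show "w = -(t3/t2)*x" using wx by simp
  qed
  then show ?thesis unfolding llw_xL_def lambertW0_def using t2 t3 by simp
qed

lemma xU_eq: assumes "t2/t3 \<le> x" "hh t1 t2 t3 x = y"
  shows "llw_xU t1 t2 t3 y = x"
proof -
  have c: "0 < t2/t3" using t2 t3 by simp
  have x0: "0 < x" using c assms by linarith
  let ?z = "- (t3 / t2) * exp (- (y - t1) / t2)"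
  have "(THE w. w \<le> -1 \<and> w * exp w = ?z) = -(t3/t2)*x"
  proof (rule the_equality)
    show "-(t3/t2)*x \<le> -1 \<and> (-(t3/t2)*x) * exp (-(t3/t2)*x) = ?z"
      using link[OF x0] assms t2 t3 by (auto simp: field_simps)
  next
    fix w assume w: "w \<le> -1 \<and> w * exp w = ?z"
    define x' where "x' = -(t2/t3)*w"
    have wx: "w = -(t3/t2)*x'" unfolding x'_def using t2 t3 by simp
    have "t2 * 1 \<le> t2 * (-w)" using w t2 by (intro mult_left_mono) auto
    then have "t2/t3 \<le> x'" unfolding x'_def using t3 by (simp add: field_simps)
    then have x'0: "0 < x'" using c by linarith
    have "hh t1 t2 t3 x' = y" using link[OF x'0, of y] w wx by simp
    then have "x' = x"
      using hh_inc[OF assms(1), of x'] hh_inc[OF \<open>t2/t3 \<le> x'\<close>, of x] assms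
      by (cases x' x rule: linorder_cases) auto
    then show "w = -(t3/t2)*x" using wx by simp
  qed
  then show ?thesis unfolding llw_xU_def lambertWm1_def using t2 t3 by simp
qed

lemma xL_props: assumes "llw_ymin t1 t2 t3 \<le> y"
  shows "0 < llw_xL t1 t2 t3 y" "llw_xL t1 t2 t3 y \<le> t2/t3" "hh t1 t2 t3 (llw_xL t1 t2 t3 y) = y"
  using ex_low[OF assms] xL_eq by auto

lemma xU_props: assumes "llw_ymin t1 t2 t3 \<le> y"
  shows "t2/t3 \<le> llw_xU t1 t2 t3 y" "hh t1 t2 t3 (llw_xU t1 t2 t3 y) = y"
  using ex_high[OF assms] xU_eq by auto


lemma xL_hh: "0 < x \<Longrightarrow> x \<le> t2/t3 \<Longrightarrow> llw_xL t1 t2 t3 (hh t1 t2 t3 x) = x"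
  by (rule xL_eq) auto

lemma xU_hh: "t2/t3 \<le> x \<Longrightarrow> llw_xU t1 t2 t3 (hh t1 t2 t3 x) = x"
  by (rule xU_eq) auto

lemma xL_ymin: "llw_xL t1 t2 t3 (llw_ymin t1 t2 t3) = t2/t3"
  using xL_hh[of "t2/t3"] hh_c t2 t3 by simp

lemma xU_ymin: "llw_xU t1 t2 t3 (llw_ymin t1 t2 t3) = t2/t3"
  using xU_hh[of "t2/t3"] hh_c by simp

lemma hh_le_iff: assumes "0 < x" "llw_ymin t1 t2 t3 \<le> y"
  shows "hh t1 t2 t3 x \<le> y \<longleftrightarrow> llw_xL t1 t2 t3 y \<le> x \<and> x \<le> llw_xU t1 t2 t3 y"
proof -
  note L = xL_props[OF assms(2)] and U = xU_props[OF assms(2)]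
  consider "x \<le> t2/t3" | "t2/t3 \<le> x" by linarith
  then show ?thesis
  proof cases
    case 1
    have "hh t1 t2 t3 x \<le> y \<longleftrightarrow> llw_xL t1 t2 t3 y \<le> x"
      using hh_dec[OF assms(1), of "llw_xL t1 t2 t3 y"] hh_dec[OF L(1), of x] L 1
      by (cases x "llw_xL t1 t2 t3 y" rule: linorder_cases) auto
    then show ?thesis using 1 U by auto
  next
    case 2
    have "hh t1 t2 t3 x \<le> y \<longleftrightarrow> x \<le> llw_xU t1 t2 t3 y"
      using hh_inc[OF 2, of "llw_xU t1 t2 t3 y"] hh_inc[OF U(1), of x] U 2
      by (cases x "llw_xU t1 t2 t3 y" rule: linorder_cases) auto
    then show ?thesis using 2 L by auto
  qed
qed

lemma xL_lt: assumes "llw_ymin t1 t2 t3 < y" shows "llw_xL t1 t2 t3 y < t2/t3"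
proof -
  have "llw_xL t1 t2 t3 y \<noteq> t2/t3" using xL_props(3)[of y] assms hh_c by auto
  then show ?thesis using xL_props(2)[of y] assms by simp
qed

lemma xU_gt: assumes "llw_ymin t1 t2 t3 < y" shows "t2/t3 < llw_xU t1 t2 t3 y"
proof -
  have "llw_xU t1 t2 t3 y \<noteq> t2/t3" using xU_props(2)[of y] assms hh_c by auto
  then show ?thesis using xU_props(1)[of y] assms by simp
qed

lemma xL_anti: assumes "llw_ymin t1 t2 t3 \<le> y1" "y1 \<le> y2"
  shows "llw_xL t1 t2 t3 y2 \<le> llw_xL t1 t2 t3 y1"
  using hh_le_iff[OF xL_props(1)[OF assms(1)], of y2] xL_props[OF assms(1)] assms by auto

lemma xU_mono: assumes "llw_ymin t1 t2 t3 \<le> y1" "y1 \<le> y2"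
  shows "llw_xU t1 t2 t3 y1 \<le> llw_xU t1 t2 t3 y2"
proof -
  have "0 < t2/t3" using t2 t3 by simp
  then have p: "0 < llw_xU t1 t2 t3 y1" using xU_props(1)[OF assms(1)] by linarith
  show ?thesis using hh_le_iff[OF p, of y2] xU_props[OF assms(1)] assms by auto
qed

end


theorem mainTheorem1:
  fixes M :: "'a measure" and X :: "'a \<Rightarrow> real" and f F :: "real \<Rightarrow> real"
    and t1 t2 t3 :: real
  assumes "prob_space M"
    and distX: "distributed M lborel X (\<lambda>x. ennreal (f x))"
    and f_nonneg: "\<And>x. 0 \<le> f x"
    and supp: "AE \<omega> in M. 0 \<le> X \<omega>"
    and F_def: "\<And>x. F x = measure M {\<omega> \<in> space M. X \<omega> \<le> x}"
    and "t2 > 0" and "t3 > 0"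
  defines "Y \<equiv> (\<lambda>\<omega>. t1 - t2 * ln (X \<omega>) + t3 * X \<omega>)"
  shows "(AE \<omega> in M. llw_ymin t1 t2 t3 \<le> Y \<omega>)
    \<and> (\<forall>y \<ge> llw_ymin t1 t2 t3.
          measure M {\<omega> \<in> space M. Y \<omega> \<le> y} = F (llw_xU t1 t2 t3 y) - F (llw_xL t1 t2 t3 y))
    \<and> distributed M lborel Y (\<lambda>y. ennreal (if llw_ymin t1 t2 t3 < y then
          llw_xL t1 t2 t3 y / (t2 - t3 * llw_xL t1 t2 t3 y) * f (llw_xL t1 t2 t3 y)
        + llw_xU t1 t2 t3 y / (t3 * llw_xU t1 t2 t3 y - t2) * f (llw_xU t1 t2 t3 y)
        else 0))"
proof -
  interpret prob_space M by fact
  note t2 = \<open>t2 > 0\<close> and t3 = \<open>t3 > 0\<close>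
  have c0: "0 < t2/t3" using t2 t3 by simp
  have Xm[measurable]: "X \<in> borel_measurable M" using distributed_measurable[OF distX] by simp
  have fm[measurable]: "f \<in> borel_measurable borel"
    using distributed_real_measurable[OF _ distX] f_nonneg by simp
  have Ym[measurable]: "Y \<in> borel_measurable M" unfolding Y_def by measurable
  have YX: "Y \<omega> = hh t1 t2 t3 (X \<omega>)" for \<omega> unfolding Y_def hh_def by simp
  have emX: "emeasure M {\<omega> \<in> space M. X \<omega> \<in> A} = (\<integral>\<^sup>+x. ennreal (f x) * indicator A x \<partial>lborel)"
    if "A \<in> sets borel" for A
  proof -
    have "{\<omega> \<in> space M. X \<omega> \<in> A} = X -` A \<inter> space M" by auto
    then show ?thesis using distributed_emeasure[OF distX, of A] that by simp
  qed
  have null: "AE \<omega> in M. X \<omega> \<noteq> a" for a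
  proof -
    have "emeasure M {\<omega> \<in> space M. X \<omega> \<in> {a}} = (\<integral>\<^sup>+x. ennreal (f x) * indicator {a} x \<partial>lborel)"
      by (rule emX) simp
    also have "\<dots> = 0" by simp
    finally have "emeasure M {\<omega> \<in> space M. X \<omega> = a} = 0" by simp
    then have "{\<omega> \<in> space M. X \<omega> = a} \<in> null_sets M" by (auto simp: null_sets_def)
    then show ?thesis by (rule AE_I') auto
  qed
  have pos: "AE \<omega> in M. 0 < X \<omega>" using supp null[of 0] by eventually_elim auto
  let ?ym = "llw_ymin t1 t2 t3" and ?xL = "llw_xL t1 t2 t3" and ?xU = "llw_xU t1 t2 t3"
  have P1: "AE \<omega> in M. ?ym \<le> Y \<omega>"
    using pos by eventually_elim (auto simp: YX intro: hh_ge[OF t2 t3])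
  have P2: "measure M {\<omega> \<in> space M. Y \<omega> \<le> y} = F (?xU y) - F (?xL y)" if y: "?ym \<le> y" for y
  proof -
    have "measure M {\<omega> \<in> space M. Y \<omega> \<le> y} = measure M {\<omega> \<in> space M. ?xL y < X \<omega> \<and> X \<omega> \<le> ?xU y}"
    proof (rule measure_eq_AE)
      show "AE \<omega> in M. (\<omega> \<in> {\<omega> \<in> space M. Y \<omega> \<le> y}) = (\<omega> \<in> {\<omega> \<in> space M. ?xL y < X \<omega> \<and> X \<omega> \<le> ?xU y})"
        using pos null[of "?xL y"]
        by eventually_elim (auto simp: YX hh_le_iff[OF t2 t3 _ y])
    qed measurable
    also have "{\<omega> \<in> space M. ?xL y < X \<omega> \<and> X \<omega> \<le> ?xU y} =
       {\<omega> \<in> space M. X \<omega> \<le> ?xU y} - {\<omega> \<in> space M. X \<omega> \<le> ?xL y}" by auto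
    also have "measure M \<dots> = F (?xU y) - F (?xL y)" unfolding F_def
      by (rule finite_measure_Diff) (use xL_props(2)[OF t2 t3 y] xU_props(1)[OF t2 t3 y] in auto)
    finally show ?thesis .
  qed
  define gL where "gL y = (if ?ym < y then ?xL y / (t2 - t3 * ?xL y) * f (?xL y) else 0)" for y
  define gU where "gU y = (if ?ym < y then ?xU y / (t3 * ?xU y - t2) * f (?xU y) else 0)" for y
  define g where "g y = ennreal (if ?ym < y then
          ?xL y / (t2 - t3 * ?xL y) * f (?xL y) + ?xU y / (t3 * ?xU y - t2) * f (?xU y) else 0)" for y
  have gL_nn: "0 \<le> gL y" for y
  proof (cases "?ym < y")
    case True
    have "0 < ?xL y" "?xL y < t2/t3" using xL_props(1)[OF t2 t3, of t1 y] xL_lt[OF t2 t3 True] True by auto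
    then have "0 < t2 - t3 * ?xL y" using t3 by (simp add: field_simps)
    then show ?thesis unfolding gL_def using True \<open>0 < ?xL y\<close> f_nonneg by simp
  qed (simp add: gL_def)
  have gU_nn: "0 \<le> gU y" for y
  proof (cases "?ym < y")
    case True
    have "t2/t3 < ?xU y" using xU_gt[OF t2 t3 True] by auto
    then have "0 < t3 * ?xU y - t2" using t3 by (simp add: field_simps)
    moreover have "0 < ?xU y" using \<open>t2/t3 < ?xU y\<close> c0 by linarith
    ultimately show ?thesis unfolding gU_def using True f_nonneg by simp
  qed (simp add: gU_def)
  have g_eq: "g y = ennreal (gL y) + ennreal (gU y)" for y
  proof -
    have "g y = ennreal (gL y + gU y)" unfolding g_def gL_def gU_def by simp
    then show ?thesis using gL_nn[of y] gU_nn[of y] by (simp add: ennreal_plus del: ennreal_plus_if)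
  qed
  define xLm where "xLm y = ?xL (max y ?ym)" for y
  define xUm where "xUm y = ?xU (max y ?ym)" for y
  have "mono (\<lambda>y. - xLm y)" unfolding mono_def xLm_def
    by (auto intro!: xL_anti[OF t2 t3] simp: max_def)
  then have "(\<lambda>y. - xLm y) \<in> borel_measurable borel"
    by (rule borel_measurable_mono)
  then have "(\<lambda>y. - (- xLm y)) \<in> borel_measurable borel" by measurable
  then have xLm_m[measurable]: "xLm \<in> borel_measurable borel" by simp
  have "mono xUm" unfolding mono_def xUm_def
    by (auto intro!: xU_mono[OF t2 t3] simp: max_def)
  then have xUm_m[measurable]: "xUm \<in> borel_measurable borel" using borel_measurable_mono by blast
  have "gL = (\<lambda>y. if ?ym < y then xLm y / (t2 - t3 * xLm y) * f (xLm y) else 0)"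
    unfolding gL_def xLm_def by (auto simp: max_def)
  then have gL_m[measurable]: "gL \<in> borel_measurable borel" by simp
  have "gU = (\<lambda>y. if ?ym < y then xUm y / (t3 * xUm y - t2) * f (xUm y) else 0)"
    unfolding gU_def xUm_def by (auto simp: max_def)
  then have gU_m[measurable]: "gU \<in> borel_measurable borel" by simp
  have g_m[measurable]: "g \<in> borel_measurable borel" unfolding g_eq[abs_def] by measurable
  have U: "(\<integral>\<^sup>+x. ennreal (gU x) * indicator {?ym..y} x \<partial>lborel) =
      (\<integral>\<^sup>+x. ennreal (f x) * indicator {t2/t3..?xU y} x \<partial>lborel)" if y: "?ym < y" for y
  proof -
    let ?b = "?xU y"
    have cb: "t2/t3 \<le> ?b" using xU_props(1)[OF t2 t3, of t1 y] y by simp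
    have hb: "hh t1 t2 t3 ?b = y" using xU_props(2)[OF t2 t3, of t1 y] y by simp
    have "(\<integral>\<^sup>+x. ennreal (gU x) * indicator {?ym..y} x \<partial>lborel) =
        (\<integral>\<^sup>+x. ennreal (gU x * indicator {hh t1 t2 t3 (t2/t3)..hh t1 t2 t3 ?b} x) \<partial>lborel)"
      using hh_c[OF t2 t3, of t1] hb by (intro nn_integral_cong) (simp split: split_indicator)
    also have "\<dots> = (\<integral>\<^sup>+x. ennreal (gU (hh t1 t2 t3 x) * (t3 - t2/x) * indicator {t2/t3..?b} x) \<partial>lborel)"
    proof (rule nn_integral_substitution)
      show "set_borel_measurable borel {hh t1 t2 t3 (t2/t3)..hh t1 t2 t3 ?b} gU"
        unfolding set_borel_measurable_def by measurable
      show "(hh t1 t2 t3 has_real_derivative t3 - t2 / x) (at x)" if "x \<in> {t2/t3..?b}" for x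
        using that c0 by (intro hh_deriv[OF t2 t3]) auto
      show "continuous_on {t2/t3..?b} (\<lambda>x. t3 - t2 / x)"
        using c0 by (auto intro!: continuous_intros)
      show "0 \<le> t3 - t2 / x" if "x \<in> {t2/t3..?b}" for x
      proof -
        have x0: "0 < x" using that c0 by auto
        have "t2 \<le> t3 * x" using that t3 by (auto simp: field_simps)
        then have "t2 / x \<le> t3" using x0 by (simp add: field_simps)
        then show ?thesis by simp
      qed
    qed (rule cb)
    also have "\<dots> = (\<integral>\<^sup>+x. ennreal (f x) * indicator {t2/t3..?b} x \<partial>lborel)"
    proof (rule nn_integral_cong_AE)
      show "AE x in lborel. ennreal (gU (hh t1 t2 t3 x) * (t3 - t2/x) * indicator {t2/t3..?b} x) =
          ennreal (f x) * indicator {t2/t3..?b} x"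
        using AE_lborel_singleton[of "t2/t3"]
      proof eventually_elim
        case (elim x)
        show ?case
        proof (cases "x \<in> {t2/t3..?b}")
          case True
          then have x: "t2/t3 < x" using elim by auto
          then have x0: "0 < x" using c0 by linarith
          have "?ym < hh t1 t2 t3 x" using hh_gt[OF t2 t3 x0] x by auto
          moreover have "?xU (hh t1 t2 t3 x) = x" using xU_hh[OF t2 t3] x by auto
          moreover have "t3 * x - t2 > 0" using x t3 by (simp add: field_simps)
          ultimately have "gU (hh t1 t2 t3 x) * (t3 - t2/x) = f x"
            unfolding gU_def using x0 by (simp add: field_simps)
          then show ?thesis using True by simp
        qed simp
      qed
    qed
    finally show ?thesis .
  qed
  have L: "(\<integral>\<^sup>+x. ennreal (gL x) * indicator {?ym..y} x \<partial>lborel) =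
      (\<integral>\<^sup>+x. ennreal (f x) * indicator {?xL y..<t2/t3} x \<partial>lborel)" if y: "?ym < y" for y
  proof -
    let ?a = "?xL y"
    let ?h = "\<lambda>x. hh t1 t2 t3 (-x)"
    have a0: "0 < ?a" using xL_props(1)[OF t2 t3, of t1 y] y by simp
    have ac: "?a < t2/t3" using xL_lt[OF t2 t3 y] .
    have ha: "hh t1 t2 t3 ?a = y" using xL_props(3)[OF t2 t3, of t1 y] y by simp
    have "(\<integral>\<^sup>+x. ennreal (gL x) * indicator {?ym..y} x \<partial>lborel) =
        (\<integral>\<^sup>+x. ennreal (gL x * indicator {?h (-(t2/t3))..?h (-?a)} x) \<partial>lborel)"
      using hh_c[OF t2 t3, of t1] ha by (intro nn_integral_cong) (simp split: split_indicator)
    also have "\<dots> = (\<integral>\<^sup>+x. ennreal (gL (?h x) * (- t3 - t2/x) * indicator {-(t2/t3)..-?a} x) \<partial>lborel)"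
    proof (rule nn_integral_substitution)
      show "set_borel_measurable borel {?h (-(t2/t3))..?h (-?a)} gL"
        unfolding set_borel_measurable_def by measurable
      show "(?h has_real_derivative - t3 - t2 / x) (at x)" if "x \<in> {-(t2/t3)..-?a}" for x
      proof -
        have "x < 0" using that a0 by auto
        then show ?thesis unfolding hh_def
          by (auto intro!: derivative_eq_intros simp: field_simps)
      qed
      show "continuous_on {-(t2/t3)..-?a} (\<lambda>x. - t3 - t2 / x)"
        using a0 by (auto intro!: continuous_intros)
      show "0 \<le> - t3 - t2 / x" if "x \<in> {-(t2/t3)..-?a}" for x
      proof -
        have "0 < -x" "-x \<le> t2/t3" using that a0 by auto
        then have "t3 * (-x) \<le> t2" using t3 by (simp add: field_simps)
        then have "t3 \<le> t2 / (-x)" using \<open>0 < -x\<close> by (simp add: field_simps)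
        then show ?thesis by simp
      qed
    qed (use ac in simp)
    also have "\<dots> = (\<integral>\<^sup>+x. ennreal (f (-x)) * indicator {-(t2/t3)<..-?a} x \<partial>lborel)"
    proof (rule nn_integral_cong_AE)
      show "AE x in lborel. ennreal (gL (?h x) * (- t3 - t2/x) * indicator {-(t2/t3)..-?a} x) =
          ennreal (f (-x)) * indicator {-(t2/t3)<..-?a} x"
        using AE_lborel_singleton[of "-(t2/t3)"]
      proof eventually_elim
        case (elim x)
        show ?case
        proof (cases "x \<in> {-(t2/t3)..-?a}")
          case True
          define u where "u = -x"
          have x: "u < t2/t3" "?a \<le> u" using elim True unfolding u_def by auto
          then have x0: "0 < u" using a0 by linarith
          have "?ym < hh t1 t2 t3 u" using hh_gt[OF t2 t3 x0] x by auto
          moreover have "?xL (hh t1 t2 t3 u) = u" using xL_hh[OF t2 t3 x0] x by auto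
          moreover have "t2 - t3 * u > 0" using x t3 by (simp add: field_simps)
          ultimately have g1: "gL (hh t1 t2 t3 u) = u / (t2 - t3 * u) * f u"
            unfolding gL_def by simp
          have g2: "- t3 - t2/x = (t2 - t3 * u) / u" using x0 unfolding u_def by (simp add: field_simps)
          have "gL (hh t1 t2 t3 u) * (- t3 - t2/x) = f u"
            unfolding g1 g2 using x0 \<open>t2 - t3 * u > 0\<close> by (simp add: field_simps)
          then show ?thesis using True elim unfolding u_def by (simp add: indicator_def)
        qed (auto simp: indicator_def)
      qed
    qed
    also have "\<dots> = (\<integral>\<^sup>+x. ennreal (f x) * indicator {?a..<t2/t3} x \<partial>lborel)"
    proof -
      have "(\<integral>\<^sup>+x. ennreal (f x) * indicator {?a..<t2/t3} x \<partial>lborel) =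
          ennreal \<bar>-1\<bar> * (\<integral>\<^sup>+x. ennreal (f (0 + -1 * x)) * indicator {?a..<t2/t3} (0 + -1 * x) \<partial>lborel)"
        by (rule nn_integral_real_affine) auto
      also have "\<dots> = (\<integral>\<^sup>+x. ennreal (f (-x)) * indicator {-(t2/t3)<..-?a} x \<partial>lborel)"
        by (auto intro!: nn_integral_cong simp: indicator_def)
      finally show ?thesis ..
    qed
    finally show ?thesis .
  qed
  have key: "emeasure (distr M lborel Y) {..y} = emeasure (density lborel g) {..y}" for y
  proof -
    have l1: "emeasure (distr M lborel Y) {..y} = emeasure M {\<omega> \<in> space M. Y \<omega> \<le> y}"
      by (subst emeasure_distr) (auto intro!: arg_cong[where f="emeasure M"])
    have r1: "emeasure (density lborel g) {..y} = (\<integral>\<^sup>+x. g x * indicator {..y} x \<partial>lborel)"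
      by (subst emeasure_density) auto
    show ?thesis
    proof (cases "?ym < y")
      case False
      have "emeasure M {\<omega> \<in> space M. Y \<omega> \<le> y} = emeasure M {}"
      proof (rule emeasure_eq_AE)
        show "AE \<omega> in M. (\<omega> \<in> {\<omega> \<in> space M. Y \<omega> \<le> y}) = (\<omega> \<in> {})"
          using pos null[of "t2/t3"]
        proof eventually_elim
          case (elim \<omega>)
          then show ?case using hh_gt[OF t2 t3 elim(1), of t1] False by (auto simp: YX)
        qed
      qed auto
      moreover have "(\<integral>\<^sup>+x. g x * indicator {..y} x \<partial>lborel) = (\<integral>\<^sup>+x. 0 \<partial>(lborel::real measure))"
        using False by (intro nn_integral_cong) (auto simp: g_def indicator_def)
      ultimately show ?thesis using l1 r1 by simp
    next
      case True
      have "emeasure M {\<omega> \<in> space M. Y \<omega> \<le> y} = emeasure M {\<omega> \<in> space M. X \<omega> \<in> {?xL y..?xU y}}"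
      proof (rule emeasure_eq_AE)
        show "AE \<omega> in M. (\<omega> \<in> {\<omega> \<in> space M. Y \<omega> \<le> y}) = (\<omega> \<in> {\<omega> \<in> space M. X \<omega> \<in> {?xL y..?xU y}})"
          using pos by eventually_elim (use True in \<open>auto simp: YX hh_le_iff[OF t2 t3]\<close>)
      qed auto
      also have "\<dots> = (\<integral>\<^sup>+x. ennreal (f x) * indicator {?xL y..?xU y} x \<partial>lborel)"
        by (rule emX) simp
      also have "\<dots> = (\<integral>\<^sup>+x. ennreal (f x) * indicator {?xL y..<t2/t3} x + ennreal (f x) * indicator {t2/t3..?xU y} x \<partial>lborel)"
        using xL_lt[OF t2 t3 True] xU_gt[OF t2 t3 True]
        by (intro nn_integral_cong) (auto simp: indicator_def)
      also have "\<dots> = (\<integral>\<^sup>+x. ennreal (f x) * indicator {?xL y..<t2/t3} x \<partial>lborel) + (\<integral>\<^sup>+x. ennreal (f x) * indicator {t2/t3..?xU y} x \<partial>lborel)"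
        by (rule nn_integral_add) auto
      also have "\<dots> = (\<integral>\<^sup>+x. ennreal (gL x) * indicator {?ym..y} x \<partial>lborel) + (\<integral>\<^sup>+x. ennreal (gU x) * indicator {?ym..y} x \<partial>lborel)"
        using L[OF True] U[OF True] by simp
      also have "\<dots> = (\<integral>\<^sup>+x. ennreal (gL x) * indicator {?ym..y} x + ennreal (gU x) * indicator {?ym..y} x \<partial>lborel)"
        by (rule nn_integral_add[symmetric]) auto
      also have "\<dots> = (\<integral>\<^sup>+x. g x * indicator {..y} x \<partial>lborel)"
        by (intro nn_integral_cong) (auto simp: g_eq gL_def gU_def indicator_def distrib_right)
      finally show ?thesis using l1 r1 by simp
    qed
  qed
  have "distr M lborel Y = density lborel g"
  proof (rule measure_eqI_generator_eq[where \<Omega>=UNIV and E="range atMost" and A="\<lambda>i. {..real i}"])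
    show "Int_stable (range atMost :: real set set)" by (auto simp: Int_stable_def)
    have SB: "sets (borel::real measure) = sigma_sets UNIV (range atMost)"
      by (subst borel_eq_atMost) (rule sets_measure_of, auto)
    show "sets (distr M lborel Y) = sigma_sets UNIV (range atMost)" using SB by simp
    show "sets (density lborel g) = sigma_sets UNIV (range atMost)" using SB by simp
    show "(\<Union>i. {..real i}) = UNIV" by (auto intro: real_arch_simple)
    show "emeasure (distr M lborel Y) {..real i} \<noteq> \<infinity>" for i
      by (simp add: emeasure_distr)
  qed (auto simp: key)
  then have P3: "distributed M lborel Y g" unfolding distributed_def by simp
  show ?thesis using P1 P2 P3 unfolding g_def by blast
qed
end
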